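(* Let $\mathcal X$ and $\mathcal Y$ be countable spaces, each endowed with the discrete metric. If $\{\mu_n\}_{n\in\mathbb N}\subset\wp(\mathcal X\times\mathcal Y)$ converges to $\mu$ in the weak-* topology, then $\mu_n\to\mu$ in $\wp_I(\mathcal X\times\mathcal Y)$.
   Context: For a Polish space $\mathcal S$, $\wp(\mathcal S)$ denotes the Borel probability measures and $\wp_w(\mathcal S)$ this set with the weak-* topology (weakest topology making $\mu\mapsto\int g\,d\mu$ continuous for all bounded continuous $g$). For $\mu\in\wp(\mathcal X\times\mathcal Y)$, $\mu^{\mathcal X}$ is the marginal and $\mu(\cdot\mid x)$ a regular conditional distribution on $\mathcal Y$ given $x$. Let $\psi(\mu)\in\wp(\mathcal X\times\wp_w(\mathcal Y))$ be $\psi(\mu)(dx,d\zeta)=\delta_{\mu(\cdot\mid x)}(d\zeta)\mu^{\mathcal X}(dx)$. The topology of information on $\wp(\mathcal X\times\mathcal Y)$ is the coarsest topology making $\psi$ continuous into $\wp_w(\mathcal X\times\wp_w(\mathcal Y))$; $\wp_I(\mathcal X\times\mathcal Y)$ denotes $\wp(\mathcal X\times\mathcal Y)$ with it. *)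

theory Defs
  imports "HOL-Analysis.Analysis" "HOL-Probability.Probability"
begin

text \<open>Probability measures on a discrete countable space are represented as pmfs.
  Bounded continuous real functions on a topological space T:\<close>
definition bounded_continuous_funs :: "'a topology \<Rightarrow> ('a \<Rightarrow> real) set" where
  "bounded_continuous_funs T =
     {g. continuous_map T euclideanreal g \<and> bounded (g ` topspace T)}"

definition weak_star_topology :: "'a topology \<Rightarrow> 'a pmf topology" where
  "weak_star_topology T =
     pullback_topology UNIV
       (\<lambda>p. \<lambda>g\<in>bounded_continuous_funs T. measure_pmf.expectation p g)
       (product_topology (\<lambda>_. euclideanreal) (bounded_continuous_funs T))"

text \<open>Regular conditional distribution of the second coordinate given the first
  (relevant only for x in the support of the first marginal).\<close>
definition cond_dist :: "('x \<times> 'y) pmf \<Rightarrow> 'x \<Rightarrow> 'y pmf" where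
  "cond_dist \<mu> x = map_pmf snd (cond_pmf \<mu> {z. fst z = x})"

definition psi :: "('x \<times> 'y) pmf \<Rightarrow> ('x \<times> 'y pmf) pmf" where
  "psi \<mu> = map_pmf (\<lambda>x. (x, cond_dist \<mu> x)) (map_pmf fst \<mu>)"

definition information_topology :: "('x \<times> 'y) pmf topology" where
  "information_topology =
     pullback_topology UNIV psi
       (weak_star_topology
          (prod_topology (discrete_topology UNIV)
                         (weak_star_topology (discrete_topology UNIV))))"

end

theory Submission
  imports Defs
begin

lemma integral_cond_pmf:
  fixes f :: "'a \<Rightarrow> real"
  assumes "set_pmf p \<inter> s \<noteq> {}"
  shows "measure_pmf.expectation (cond_pmf p s) f =
         measure_pmf.expectation p (\<lambda>x. indicator s x * f x) / measure p s"
proof -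
  have pos: "measure p s > 0" using assms by (auto intro: measure_pmf_posI)
  have "measure_pmf (cond_pmf p s) = density p (\<lambda>x. ennreal (indicator s x / measure p s))"
    unfolding cond_pmf.rep_eq[OF assms] uniform_measure_def
    using pos by (intro arg_cong[where f="density _"] ext)
       (simp add: measure_pmf.emeasure_eq_measure indicator_def divide_ennreal[of 1, symmetric])
  then have "measure_pmf.expectation (cond_pmf p s) f =
     measure_pmf.expectation p (\<lambda>x. (indicator s x / measure p s) *\<^sub>R f x)"
    by (simp add: integral_density)
  also have "\<dots> = measure_pmf.expectation p (\<lambda>x. indicator s x * f x) / measure p s"
    by (simp add: field_simps)
  finally show ?thesis .
qed

lemma limitin_pullback_UNIV:
  "limitin (pullback_topology UNIV f T) xs x F \<longleftrightarrow> limitin T (\<lambda>n. f (xs n)) (f x) F"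
  unfolding limitin_def openin_pullback_topology topspace_pullback_topology
  by auto

lemma limitin_weak_star:
  "limitin (weak_star_topology T) ps p F \<longleftrightarrow>
   (\<forall>g\<in>bounded_continuous_funs T.
      ((\<lambda>n. measure_pmf.expectation (ps n) g) \<longlongrightarrow> measure_pmf.expectation p g) F)"
  unfolding weak_star_topology_def limitin_pullback_UNIV limitin_componentwise
  by (simp add: PiE_iff)

lemma bcf_discrete: "bounded_continuous_funs (discrete_topology UNIV) = {g. bounded (range g)}"
  unfolding bounded_continuous_funs_def by simp

lemma integrable_bdd:
  fixes f :: "'a \<Rightarrow> real"
  assumes "\<And>x. \<bar>f x\<bar> \<le> B"
  shows "integrable (measure_pmf p) f"
  using assms by (intro measure_pmf.integrable_const_bound[where B=B]) auto

lemma tight_approx: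
  fixes p :: "'a::countable pmf"
  assumes "e > 0"
  shows "\<exists>F. finite F \<and> F \<subseteq> set_pmf p \<and> measure p (-F) < e"
proof -
  define A where "A k = - {z \<in> set_pmf p. to_nat z < k}" for k
  have dec: "decseq A" unfolding A_def decseq_def by auto
  have "(\<lambda>k. measure p (A k)) \<longlonglongrightarrow> measure p (\<Inter>k. A k)"
    by (rule measure_pmf.finite_Lim_measure_decseq) (use dec in auto)
  moreover have "(\<Inter>k. A k) = - set_pmf p"
    unfolding A_def by auto
  moreover have "measure p (- set_pmf p) = 0"
    by (simp add: measure_pmf_zero_iff)
  ultimately have "(\<lambda>k. measure p (A k)) \<longlonglongrightarrow> 0" by simp
  then have "eventually (\<lambda>k. measure p (A k) < e) sequentially"
    using assms by (rule order_tendstoD)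
  then obtain k where "measure p (A k) < e"
    by (auto simp: eventually_sequentially)
  moreover have "finite {z \<in> set_pmf p. to_nat z < k}"
    by (rule finite_subset[of _ "to_nat -` {..<k}"]) (auto intro: finite_vimageI)
  ultimately show ?thesis unfolding A_def by blast
qed

lemma bounded_indicator: "bounded (range (indicator A :: 'a \<Rightarrow> real))"
  by (rule bounded_subset[OF finite_imp_bounded[of "{0,1}"]]) (auto simp: indicator_def)

lemma vanishing:
  fixes ps :: "nat \<Rightarrow> 'a::countable pmf" and d :: "nat \<Rightarrow> 'a \<Rightarrow> real"
  assumes ws: "\<And>g :: 'a \<Rightarrow> real. bounded (range g) \<Longrightarrow>
     ((\<lambda>n. measure_pmf.expectation (ps n) g) \<longlongrightarrow> measure_pmf.expectation p g) sequentially"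
    and d0: "\<And>n z. 0 \<le> d n z" and dC: "\<And>n z. d n z \<le> C"
    and dl: "\<And>z. z \<in> set_pmf p \<Longrightarrow> ((\<lambda>n. d n z) \<longlongrightarrow> 0) sequentially"
  shows "((\<lambda>n. measure_pmf.expectation (ps n) (d n)) \<longlongrightarrow> 0) sequentially"
proof (rule tendstoI)
  fix e :: real assume e: "e > 0"
  have C0: "C \<ge> 0" using d0[of 0 undefined] dC[of 0 undefined] by linarith
  define \<eta> where "\<eta> = e / (4 * (C + 1))"
  have eta: "\<eta> > 0" using e C0 unfolding \<eta>_def by simp
  have Ceta: "C * (2 * \<eta>) \<le> e / 2" unfolding \<eta>_def using C0 e
    by (simp add: field_simps)
  obtain F where F: "finite F" "F \<subseteq> set_pmf p" "measure p (-F) < \<eta>"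
    using tight_approx[OF eta] by blast
  have "((\<lambda>n. measure_pmf.expectation (ps n) (indicator (-F) :: 'a \<Rightarrow> real)) \<longlongrightarrow>
         measure_pmf.expectation p (indicator (-F))) sequentially"
    by (rule ws) (rule bounded_indicator)
  then have "((\<lambda>n. measure (ps n) (-F)) \<longlongrightarrow> measure p (-F)) sequentially"
    by simp
  then have ev1: "eventually (\<lambda>n. measure (ps n) (-F) < 2 * \<eta>) sequentially"
    using F(3) eta by (intro order_tendstoD) auto
  have "((\<lambda>n. \<Sum>w\<in>F. d n w) \<longlongrightarrow> (\<Sum>w\<in>F. 0)) sequentially"
    using F(2) by (intro tendsto_sum dl) auto
  then have ev2: "eventually (\<lambda>n. (\<Sum>w\<in>F. d n w) < e / 2) sequentially"
    using e by (intro order_tendstoD) auto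
  show "eventually (\<lambda>n. dist (measure_pmf.expectation (ps n) (d n)) 0 < e) sequentially"
    using ev1 ev2
  proof eventually_elim
    case (elim n)
    define S where "S = (\<Sum>w\<in>F. d n w)"
    have S0: "S \<ge> 0" unfolding S_def by (intro sum_nonneg d0)
    have pw: "d n z \<le> S + C * indicator (-F) z" for z
    proof (cases "z \<in> F")
      case True
      then have "d n z \<le> S" unfolding S_def using F(1) d0 by (intro member_le_sum) auto
      then show ?thesis using True by simp
    next
      case False
      then show ?thesis using dC[of n z] S0 by simp
    qed
    have int1: "integrable (measure_pmf (ps n)) (d n)"
      by (rule integrable_bdd[where B=C]) (use d0 dC in \<open>auto simp: abs_le_iff intro: order_trans[OF _ d0]\<close>)
    have int2: "integrable (measure_pmf (ps n)) (\<lambda>z. S + C * indicator (-F) z)"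
      by (rule integrable_bdd[where B="S + C"]) (use S0 C0 in \<open>auto simp: indicator_def\<close>)
    have "measure_pmf.expectation (ps n) (d n) \<le>
          measure_pmf.expectation (ps n) (\<lambda>z. S + C * indicator (-F) z)"
      by (intro integral_mono int1 int2 pw)
    also have "\<dots> = S + C * measure (ps n) (-F)"
    proof -
      have i3: "integrable (measure_pmf (ps n)) (\<lambda>z. C * indicator (-F) z)"
        by (rule integrable_bdd[where B=C]) (use C0 in \<open>auto simp: indicator_def\<close>)
      show ?thesis using i3 by (simp add: integral_add)
    qed
    also have "\<dots> < e / 2 + C * (2 * \<eta>)"
      using elim C0 unfolding S_def
      by (intro add_less_le_mono mult_left_mono) auto
    also have "\<dots> \<le> e" using Ceta by simp
    finally have "measure_pmf.expectation (ps n) (d n) < e" .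
    moreover have "measure_pmf.expectation (ps n) (d n) \<ge> 0"
      by (intro integral_nonneg_AE) (simp add: d0)
    ultimately show ?case by simp
  qed
qed

lemma topspace_weak_star [simp]: "topspace (weak_star_topology T) = UNIV"
  unfolding weak_star_topology_def topspace_pullback_topology by (auto simp: PiE_iff)

lemma cond_dist_expect:
  fixes g :: "'y \<Rightarrow> real" and q :: "('x \<times> 'y) pmf"
  assumes "measure q {z. fst z = x} > 0"
  shows "measure_pmf.expectation (cond_dist q x) g =
    measure_pmf.expectation q (\<lambda>z. indicator {z. fst z = x} z * g (snd z)) / measure q {z. fst z = x}"
proof -
  have "set_pmf q \<inter> {z. fst z = x} \<noteq> {}"
    using assms measure_pmf_zero_iff[of q "{z. fst z = x}"] by auto
  then show ?thesis unfolding cond_dist_def by (simp add: integral_cond_pmf)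
qed

lemma expect_psi:
  fixes G :: "'x \<times> 'y pmf \<Rightarrow> real" and q :: "('x \<times> 'y) pmf"
  shows "measure_pmf.expectation (psi q) G = measure_pmf.expectation q (\<lambda>z. G (fst z, cond_dist q (fst z)))"
  unfolding psi_def map_pmf_comp by simp

theorem theorem5:
  fixes \<mu>s :: "nat \<Rightarrow> ('x::countable \<times> 'y::countable) pmf"
    and \<mu> :: "('x \<times> 'y) pmf"
  assumes "limitin (weak_star_topology (discrete_topology UNIV)) \<mu>s \<mu> sequentially"
  shows "limitin information_topology \<mu>s \<mu> sequentially"
proof -
  have ws: "((\<lambda>n. measure_pmf.expectation (\<mu>s n) g) \<longlongrightarrow> measure_pmf.expectation \<mu> g) sequentially"
    if "bounded (range g)" for g :: "'x \<times> 'y \<Rightarrow> real"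
    using assms that unfolding limitin_weak_star bcf_discrete by auto
  define c where "c n x = cond_dist (\<mu>s n) x" for n x
  define c0 where "c0 x = cond_dist \<mu> x" for x
  have condlim: "limitin (weak_star_topology (discrete_topology UNIV)) (\<lambda>n. c n (fst z)) (c0 (fst z)) sequentially"
    if z: "z \<in> set_pmf \<mu>" for z
  proof -
    define A where "A = {w :: 'x \<times> 'y. fst w = fst z}"
    have mpos: "measure \<mu> A > 0" unfolding A_def using z by (auto intro: measure_pmf_posI)
    have "((\<lambda>n. measure_pmf.expectation (\<mu>s n) (indicator A :: _ \<Rightarrow> real)) \<longlongrightarrow>
          measure_pmf.expectation \<mu> (indicator A)) sequentially"
      by (rule ws) (rule bounded_indicator)
    then have mlim: "((\<lambda>n. measure (\<mu>s n) A) \<longlongrightarrow> measure \<mu> A) sequentially" by simp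
    then have evpos: "eventually (\<lambda>n. measure (\<mu>s n) A > 0) sequentially"
      using mpos by (rule order_tendstoD)
    show ?thesis unfolding limitin_weak_star bcf_discrete
    proof (intro ballI, simp only: mem_Collect_eq)
      fix g :: "'y \<Rightarrow> real" assume gb: "bounded (range g)"
      then obtain M where M: "\<And>y. \<bar>g y\<bar> \<le> M" unfolding bounded_real by auto
      have "bounded (range (\<lambda>w. indicator A w * g (snd w)))"
        unfolding bounded_real using M
        by (intro exI[of _ M]) (auto simp: indicator_def abs_mult intro: order_trans[OF abs_ge_zero M])
      then have "((\<lambda>n. measure_pmf.expectation (\<mu>s n) (\<lambda>w. indicator A w * g (snd w)) / measure (\<mu>s n) A)
        \<longlongrightarrow> measure_pmf.expectation \<mu> (\<lambda>w. indicator A w * g (snd w)) / measure \<mu> A) sequentially"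
        using mpos by (intro tendsto_divide ws mlim) auto
      also have "measure_pmf.expectation \<mu> (\<lambda>w. indicator A w * g (snd w)) / measure \<mu> A =
                 measure_pmf.expectation (c0 (fst z)) g"
        unfolding c0_def A_def using mpos unfolding A_def by (simp add: cond_dist_expect)
      finally show "((\<lambda>n. measure_pmf.expectation (c n (fst z)) g) \<longlongrightarrow>
                 measure_pmf.expectation (c0 (fst z)) g) sequentially"
        by (rule tendsto_cong[THEN iffD1, rotated])
           (use evpos in \<open>eventually_elim, simp add: c_def A_def cond_dist_expect\<close>)
    qed
  qed
  show ?thesis
    unfolding information_topology_def limitin_pullback_UNIV limitin_weak_star
  proof
    fix G :: "'x \<times> 'y pmf \<Rightarrow> real" assume G: "G \<in> bounded_continuous_funs
        (prod_topology (discrete_topology UNIV) (weak_star_topology (discrete_topology UNIV)))"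
    then obtain B where B: "\<And>w. \<bar>G w\<bar> \<le> B"
      unfolding bounded_continuous_funs_def bounded_real by auto
    have Gc: "continuous_map (prod_topology (discrete_topology UNIV) (weak_star_topology (discrete_topology UNIV))) euclideanreal G"
      using G unfolding bounded_continuous_funs_def by auto
    define h where "h z = G (fst z, c0 (fst z))" for z :: "'x \<times> 'y"
    define a where "a n z = G (fst z, c n (fst z))" for n and z :: "'x \<times> 'y"
    define d where "d n z = \<bar>a n z - h z\<bar>" for n z
    have pt: "((\<lambda>n. a n z) \<longlongrightarrow> h z) sequentially" if z: "z \<in> set_pmf \<mu>" for z
    proof -
      have cm: "continuous_map (weak_star_topology (discrete_topology UNIV)) euclideanreal (\<lambda>q. G (fst z, q))"
        using continuous_map_compose[OF continuous_map_pairedI[OF continuous_map_const[THEN iffD2] continuous_map_id] Gc]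
        by (simp add: o_def)
      from continuous_map_limit[OF cm condlim[OF z]]
      show ?thesis by (simp add: a_def h_def o_def)
    qed
    have van: "((\<lambda>n. measure_pmf.expectation (\<mu>s n) (d n)) \<longlongrightarrow> 0) sequentially"
    proof (rule vanishing[where C="2*B"])
      show "bounded (range g) \<Longrightarrow> ((\<lambda>n. measure_pmf.expectation (\<mu>s n) g) \<longlongrightarrow> measure_pmf.expectation \<mu> g) sequentially"
        for g :: "'x \<times> 'y \<Rightarrow> real" by (rule ws)
      show "0 \<le> d n z" for n z unfolding d_def by simp
      show "d n z \<le> 2 * B" for n z unfolding d_def a_def h_def
        using B[of "(fst z, c n (fst z))"] B[of "(fst z, c0 (fst z))"] by linarith
      show "((\<lambda>n. d n z) \<longlongrightarrow> 0) sequentially" if "z \<in> set_pmf \<mu>" for z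
        using tendsto_rabs[OF tendsto_diff[OF pt[OF that] tendsto_const[of "h z"]]]
        unfolding d_def by simp
    qed
    have bnd: "\<bar>measure_pmf.expectation (\<mu>s n) (a n) - measure_pmf.expectation (\<mu>s n) h\<bar>
        \<le> measure_pmf.expectation (\<mu>s n) (d n)" for n
    proof -
      have ia: "integrable (measure_pmf (\<mu>s n)) (a n)"
        by (rule integrable_bdd[where B=B]) (simp add: a_def B)
      have ih: "integrable (measure_pmf (\<mu>s n)) h"
        by (rule integrable_bdd[where B=B]) (simp add: h_def B)
      have "measure_pmf.expectation (\<mu>s n) (a n) - measure_pmf.expectation (\<mu>s n) h
          = measure_pmf.expectation (\<mu>s n) (\<lambda>z. a n z - h z)"
        using ia ih by (simp add: integral_diff)
      also have "\<bar>\<dots>\<bar> \<le> measure_pmf.expectation (\<mu>s n) (d n)"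
        using integral_norm_bound[of "measure_pmf (\<mu>s n)" "\<lambda>z. a n z - h z"]
        unfolding d_def by simp
      finally show ?thesis .
    qed
    have "((\<lambda>n. measure_pmf.expectation (\<mu>s n) (a n) - measure_pmf.expectation (\<mu>s n) h) \<longlongrightarrow> 0) sequentially"
      apply (rule Lim_null_comparison[OF _ van])
      apply (rule always_eventually)
      apply (unfold real_norm_def)
      apply (rule allI)
      apply (rule bnd)
      done
    moreover have "((\<lambda>n. measure_pmf.expectation (\<mu>s n) h) \<longlongrightarrow> measure_pmf.expectation \<mu> h) sequentially"
      by (rule ws) (unfold bounded_real, use B in \<open>auto simp: h_def\<close>)
    ultimately have "((\<lambda>n. (measure_pmf.expectation (\<mu>s n) (a n) - measure_pmf.expectation (\<mu>s n) h)
          + measure_pmf.expectation (\<mu>s n) h) \<longlongrightarrow> 0 + measure_pmf.expectation \<mu> h) sequentially"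
      by (rule tendsto_add)
    then show "((\<lambda>n. measure_pmf.expectation (psi (\<mu>s n)) G) \<longlongrightarrow> measure_pmf.expectation (psi \<mu>) G) sequentially"
      by (simp add: expect_psi c_def c0_def a_def[abs_def] h_def[abs_def])
  qed
qed

end
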